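(* Let $g:\mathbb{R}^3\to\mathbb{R}$ be nonnegative with $\int_{\mathbb{R}^3} g(v)\,dv=1$. Then for every $r>0$ there exists $C_r\in(0,\frac12)$ such that for all $\theta\in\mathbb{R}$ and all $\xi\in\mathbb{R}^3$ with $|\xi|>r$, $$\int_{\mathbb{R}^3} g(v)\sin^2\Big(\frac{v\cdot\xi+\theta}{2}\Big)dv\geq C_r.$$ *)

theory Defs
  imports "HOL-Analysis.Analysis"
begin

end

theory Submission
  imports Defs "HOL-Analysis.Analysis"
begin


lemma cos_near:
  fixes x \<eta> :: real
  assumes "0 < \<eta>" "\<eta> \<le> pi" "cos x > cos \<eta>"
  shows "\<exists>m::int. \<bar>x - 2*pi*m\<bar> < \<eta>"
proof -
  define m where "m = round (x/(2*pi))"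
  define y where "y = x - 2*pi*m"
  have "\<bar>of_int m - x/(2*pi)\<bar> \<le> 1/2" unfolding m_def by (rule of_int_round_abs_le)
  hence "\<bar>2*pi*m - x\<bar> \<le> pi"
  proof -
    have e: "2*pi*m - x = (2*pi)*(of_int m - x/(2*pi))" by (simp add: field_simps)
    have "\<bar>2*pi*m - x\<bar> = 2*pi*\<bar>of_int m - x/(2*pi)\<bar>"
      by (subst e, subst abs_mult) simp
    thus ?thesis using \<open>\<bar>of_int m - x/(2*pi)\<bar> \<le> 1/2\<close> by (simp add: mult_left_mono[of _ "1/2" "2*pi", simplified])
  qed
  hence yb: "\<bar>y\<bar> \<le> pi" unfolding y_def by linarith
  have "cos x = cos (y + (2*pi) * of_int m)" unfolding y_def by simp
  also have "\<dots> = cos y" by (simp add: cos_add)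
  finally have "cos \<bar>y\<bar> > cos \<eta>" using assms by simp
  hence "\<bar>y\<bar> < \<eta>" using cos_mono_le_eq[of "\<bar>y\<bar>" \<eta>] assms yb by force
  thus ?thesis unfolding y_def by blast
qed



lemma slab1:
  fixes c \<eta> :: real
  assumes "0 < \<eta>" "\<eta> < pi"
  shows "emeasure lborel {t. 0 \<le> t \<and> t \<le> 2*pi \<and> cos (c + t) > cos \<eta>} \<le> ennreal (4*\<eta>)"
proof -
  define a where "a = (c - \<eta>)/(2*pi)"
  define k where "k = \<lfloor>a\<rfloor> + 1"
  define I where "I = (\<lambda>j::int. {2*pi*(k+j) - c - \<eta> <..< 2*pi*(k+j) - c + \<eta>})"
  have sub: "{t. 0 \<le> t \<and> t \<le> 2*pi \<and> cos (c + t) > cos \<eta>} \<subseteq> I 0 \<union> I 1"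
  proof
    fix t assume "t \<in> {t. 0 \<le> t \<and> t \<le> 2*pi \<and> cos (c + t) > cos \<eta>}"
    hence t: "0 \<le> t" "t \<le> 2*pi" "cos (c + t) > cos \<eta>" by auto
    obtain m :: int where m: "\<bar>c + t - 2*pi*m\<bar> < \<eta>" using cos_near[OF assms(1) _ t(3)] assms by force
    have "2*pi*m > c - \<eta>" using m t by linarith
    hence "m > a" unfolding a_def by (simp add: field_simps)
    hence m1: "m \<ge> k" unfolding k_def by linarith
    have "2*pi*m < c + 2*pi + \<eta>" using m t by linarith
    hence "2*pi*m < c - \<eta> + 2*(2*pi)" using assms by linarith
    hence "m < a + 2" unfolding a_def by (simp add: field_simps)
    hence m2: "m \<le> k + 1" unfolding k_def by linarith
    have "m = k \<or> m = k + 1" using m1 m2 by linarith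
    thus "t \<in> I 0 \<union> I 1" using m unfolding I_def by (auto simp: abs_less_iff)
  qed
  have "emeasure lborel {t. 0 \<le> t \<and> t \<le> 2*pi \<and> cos (c + t) > cos \<eta>} \<le> emeasure lborel (I 0 \<union> I 1)"
    by (rule emeasure_mono[OF sub]) (simp add: I_def)
  also have "\<dots> \<le> emeasure lborel (I 0) + emeasure lborel (I 1)"
    by (rule emeasure_subadditive) (auto simp: I_def)
  also have "\<dots> = ennreal (2*\<eta>) + ennreal (2*\<eta>)"
    using assms by (simp add: I_def)
  also have "\<dots> = ennreal (4*\<eta>)" using assms by (simp add: ennreal_plus[symmetric])
  finally show ?thesis .
qed



lemma slab3:
  fixes \<xi> :: "real^3" and \<theta> \<eta> r R :: real
  assumes eta: "0 < \<eta>" "\<eta> < pi" and xi: "norm \<xi> > r" and r: "r > 0" and R: "R \<ge> 0"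
  shows "emeasure lborel {v \<in> cball 0 R. cos (v \<bullet> \<xi> + \<theta>) > cos \<eta>} * ennreal (2*pi)
         \<le> emeasure lborel (cball (0::real^3) (R + 2*pi/r)) * ennreal (4*\<eta>)"
proof -
  define B' where "B' = cball (0::real^3) (R + 2*pi/r)"
  define A where "A = {v \<in> cball 0 R. cos (v \<bullet> \<xi> + \<theta>) > cos \<eta>}"
  define T where "T = (\<lambda>s. {v \<in> B'. cos (v \<bullet> \<xi> + s) > cos \<eta>})"
  define P where "P = {x::real. cos x > cos \<eta>}"
  have Pb: "P \<in> sets borel" unfolding P_def by measurable
  have Tb: "T s \<in> sets lborel" for s unfolding T_def B'_def by measurable
  have Ab: "A \<in> sets lborel" unfolding A_def by measurable
  have xi0: "\<xi> \<bullet> \<xi> > 0" using xi r by auto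
  have trans: "emeasure lborel A \<le> emeasure lborel (T (\<theta> + t))" if t: "0 \<le> t" "t \<le> 2*pi" for t
  proof -
    define h where "h = (t / (\<xi> \<bullet> \<xi>)) *\<^sub>R \<xi>"
    have hx: "h \<bullet> \<xi> = t" unfolding h_def using xi0 by simp
    have "norm h = t / norm \<xi>"
      unfolding h_def using xi0 t by (simp add: power2_norm_eq_inner[symmetric] power2_eq_square)
    also have "\<dots> \<le> 2*pi/r"
      using t xi r by (simp add: frac_le)
    finally have hn: "norm h \<le> 2*pi/r" .
    have "A \<subseteq> (+) (-h) -` T (\<theta> + t) \<inter> space lborel"
    proof
      fix v assume v: "v \<in> A"
      have "norm (- h + v) \<le> norm h + norm v" by (metis norm_minus_cancel norm_triangle_ineq)
      also have "\<dots> \<le> 2*pi/r + R" using hn v unfolding A_def by auto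
      finally have n: "norm (- h + v) \<le> R + 2*pi/r" by simp
      have "(- h + v) \<bullet> \<xi> + (\<theta> + t) = v \<bullet> \<xi> + \<theta>" using hx by (simp add: inner_add_left inner_diff_left)
      hence e: "(v - h) \<bullet> \<xi> + (\<theta> + t) = v \<bullet> \<xi> + \<theta>" by simp
      show "v \<in> (+) (-h) -` T (\<theta> + t) \<inter> space lborel"
        using v n unfolding A_def T_def B'_def by (auto simp: e)
    qed
    moreover have "(+) (-h) -` T (\<theta> + t) \<inter> space lborel \<in> sets lborel"
    proof (rule measurable_sets)
      show "(+) (-h) \<in> measurable lborel borel" by measurable
      show "T (\<theta> + t) \<in> sets borel" using Tb by simp
    qed
    ultimately have "emeasure lborel A \<le> emeasure lborel ((+) (-h) -` T (\<theta> + t) \<inter> space lborel)"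
      by (intro emeasure_mono)
    also have "\<dots> = emeasure (distr lborel borel ((+) (-h))) (T (\<theta> + t))"
      by (subst emeasure_distr) (use Tb in auto)
    also have "\<dots> = emeasure lborel (T (\<theta> + t))" by (simp add: lborel_distr_plus)
    finally show ?thesis .
  qed
  define f where "f = (\<lambda>(v::real^3) (t::real). indicator B' v * indicator {0..2*pi} t * indicator P (v \<bullet> \<xi> + \<theta> + t) :: ennreal)"
  have fm: "case_prod f \<in> borel_measurable (lborel \<Otimes>\<^sub>M lborel)"
  proof -
    define Q where "Q = (B' \<times> {0..2*pi}) \<inter> {p::(real^3)\<times>real. cos \<eta> < cos (fst p \<bullet> \<xi> + \<theta> + snd p)}"
    have e: "case_prod f = indicator Q"
      by (auto simp: f_def Q_def P_def indicator_def fun_eq_iff)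
    have "closed (B' \<times> {0..2*pi})" unfolding B'_def by (intro closed_Times) auto
    moreover have "open {p::(real^3)\<times>real. cos \<eta> < cos (fst p \<bullet> \<xi> + \<theta> + snd p)}"
      by (intro open_Collect_less continuous_intros)
    ultimately have "Q \<in> sets borel" unfolding Q_def by (intro sets.Int borel_closed borel_open)
    hence "Q \<in> sets (lborel \<Otimes>\<^sub>M lborel)" by (simp add: borel_prod[symmetric])
    thus ?thesis unfolding e by simp
  qed
  have "emeasure lborel A * ennreal (2*pi) = (\<integral>\<^sup>+ t. emeasure lborel A * indicator {0..2*pi} t \<partial>lborel)"
    by (subst nn_integral_cmult_indicator) auto
  also have "\<dots> \<le> (\<integral>\<^sup>+ t. emeasure lborel (T (\<theta> + t)) * indicator {0..2*pi} t \<partial>lborel)"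
    by (intro nn_integral_mono) (auto simp: indicator_def intro: trans)
  also have "\<dots> = (\<integral>\<^sup>+ t. (\<integral>\<^sup>+ v. f v t \<partial>lborel) \<partial>lborel)"
  proof (intro nn_integral_cong)
    fix t :: real
    have "(\<integral>\<^sup>+ v. f v t \<partial>lborel) = (\<integral>\<^sup>+ v. indicator (T (\<theta> + t)) v * indicator {0..2*pi} t \<partial>lborel)"
      by (intro nn_integral_cong) (auto simp: f_def T_def P_def indicator_def add.assoc)
    also have "\<dots> = emeasure lborel (T (\<theta> + t)) * indicator {0..2*pi} t"
      using Tb by (simp add: nn_integral_multc)
    finally show "emeasure lborel (T (\<theta> + t)) * indicator {0..2*pi} t = (\<integral>\<^sup>+ v. f v t \<partial>lborel)" by simp
  qed
  also have "\<dots> = (\<integral>\<^sup>+ v. (\<integral>\<^sup>+ t. f v t \<partial>lborel) \<partial>lborel)"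
    by (rule lborel_pair.Fubini'[OF fm])
  also have "\<dots> \<le> (\<integral>\<^sup>+ v. ennreal (4*\<eta>) * indicator B' v \<partial>lborel)"
  proof (intro nn_integral_mono)
    fix v :: "real^3"
    have "(\<integral>\<^sup>+ t. f v t \<partial>lborel) = (\<integral>\<^sup>+ t. indicator B' v * indicator {t. 0 \<le> t \<and> t \<le> 2*pi \<and> cos (v \<bullet> \<xi> + \<theta> + t) > cos \<eta>} t \<partial>lborel)"
      by (intro nn_integral_cong) (auto simp: f_def P_def indicator_def)
    also have "\<dots> = indicator B' v * emeasure lborel {t. 0 \<le> t \<and> t \<le> 2*pi \<and> cos (v \<bullet> \<xi> + \<theta> + t) > cos \<eta>}"
      by (subst nn_integral_cmult) (auto)
    also have "\<dots> \<le> indicator B' v * ennreal (4*\<eta>)"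
      by (intro mult_left_mono slab1 eta) auto
    finally show "(\<integral>\<^sup>+ t. f v t \<partial>lborel) \<le> ennreal (4*\<eta>) * indicator B' v" by (simp add: mult.commute)
  qed
  also have "\<dots> = ennreal (4*\<eta>) * emeasure lborel B'"
    by (subst nn_integral_cmult_indicator) (auto simp: B'_def)
  finally show ?thesis unfolding A_def B'_def by (simp add: mult.commute)
qed



lemma leb_meas: "continuous_on UNIV (f::real^3\<Rightarrow>real) \<Longrightarrow> f \<in> borel_measurable lebesgue"
proof -
  assume "continuous_on UNIV f"
  hence "f \<in> borel_measurable borel" by (rule borel_measurable_continuous_onI)
  hence "f \<in> borel_measurable lborel" by simp
  thus ?thesis by (rule measurable_completion)
qed

theorem lemma9:
  fixes g :: "real ^ 3 \<Rightarrow> real"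
  assumes nonneg: "\<And>v. g v \<ge> 0"
    and int: "integrable lebesgue g"
    and one: "integral\<^sup>L lebesgue g = 1"
    and r: "r > 0"
  shows "\<exists>C. 0 < C \<and> C < 1/2 \<and>
           (\<forall>\<theta>::real. \<forall>\<xi>::real^3. norm \<xi> > r \<longrightarrow>
              integral\<^sup>L lebesgue (\<lambda>v. g v * (sin ((v \<bullet> \<xi> + \<theta>) / 2))\<^sup>2) \<ge> C)"
proof -
  have gm: "g \<in> borel_measurable lebesgue" using int by (rule borel_measurable_integrable)
  have cbl: "cball (0::real^3) x \<in> sets lebesgue" for x
    by (intro sets_completionI_sets) auto
  define gN where "gN = (\<lambda>n::nat. \<lambda>v. min (g v) (real n * indicator (cball 0 (real n)) v))"
  have gNm: "gN n \<in> borel_measurable lebesgue" for n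
    unfolding gN_def using gm cbl by (intro borel_measurable_min borel_measurable_times borel_measurable_indicator) auto
  have gN0: "0 \<le> gN n v" for n v unfolding gN_def using nonneg by (auto simp: indicator_def)
  have gNg: "gN n v \<le> g v" for n v unfolding gN_def by auto
  have gNN: "gN n v \<le> real n * indicator (cball 0 (real n)) v" for n v unfolding gN_def by auto
  have lim: "(\<lambda>n. gN n v) \<longlonglongrightarrow> g v" for v
  proof (rule tendsto_eventually)
    show "\<forall>\<^sub>F n in sequentially. gN n v = g v"
      unfolding eventually_sequentially
    proof (intro exI allI impI)
      fix n assume "nat \<lceil>max (g v) (norm v)\<rceil> \<le> n"
      hence "max (g v) (norm v) \<le> real n" by linarith
      thus "gN n v = g v" unfolding gN_def by (auto simp: indicator_def)
    qed
  qed
  have "(\<lambda>n. integral\<^sup>L lebesgue (gN n)) \<longlonglongrightarrow> integral\<^sup>L lebesgue g"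
    by (rule integral_dominated_convergence[where w=g, OF gm gNm int])
       (use lim gN0 gNg in auto)
  hence "\<forall>\<^sub>F n in sequentially. integral\<^sup>L lebesgue (gN n) > 3/4"
    using one by (intro order_tendstoD(1)) auto
  then obtain N0 where N0: "\<And>n. n \<ge> N0 \<Longrightarrow> integral\<^sup>L lebesgue (gN n) > 3/4"
    unfolding eventually_sequentially by blast
  define N where "N = max N0 1"
  have N1: "N \<ge> 1" and intN: "integral\<^sup>L lebesgue (gN N) > 3/4" using N0[of N] by (auto simp: N_def)
  have intgN: "integrable lebesgue (gN N)"
    by (rule Bochner_Integration.integrable_bound[OF int gNm]) (use gN0 gNg nonneg in \<open>auto intro!: AE_I2 simp: abs_of_nonneg\<close>)
  define m where "m = measure lborel (cball (0::real^3) (real N + 2*pi/r))"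
  have m0: "m \<ge> 0" unfolding m_def by simp
  have em: "emeasure lborel (cball (0::real^3) (real N + 2*pi/r)) = ennreal m"
    unfolding m_def using emeasure_lborel_cball_finite[of "0::real^3" "real N + 2*pi/r"]
    by (intro emeasure_eq_ennreal_measure) auto
  define \<eta> where "\<eta> = min (pi/2) (pi / (8 * (real N + 1) * (m + 1)))"
  have eta0: "0 < \<eta>" unfolding \<eta>_def using m0 by auto
  have eta1: "\<eta> \<le> pi/2" unfolding \<eta>_def by (rule min.cobounded1)
  hence eta2: "\<eta> < pi" using pi_gt_zero by linarith
  have etaN: "real N * (m * 4 * \<eta> / (2*pi)) \<le> 1/4"
  proof -
    have "\<eta> \<le> pi / (8 * (real N + 1) * (m + 1))" unfolding \<eta>_def by auto
    hence "real N * (m * 4 * \<eta> / (2*pi)) \<le> real N * (m * 4 * (pi / (8 * (real N + 1) * (m + 1))) / (2*pi))"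
      using m0 by (intro mult_left_mono divide_right_mono) auto
    also have "\<dots> = (real N / (real N + 1)) * (m / (m + 1)) / 4"
      using m0 pi_gt_zero by (simp add: divide_simps) (simp add: algebra_simps)
    also have "\<dots> \<le> 1 * 1 / 4"
      using m0 by (intro divide_right_mono mult_mono) auto
    finally show ?thesis by simp
  qed
  define c where "c = (1 - cos \<eta>) / 2"
  have cpos: "c > 0" unfolding c_def using cos_monotone_0_pi[of 0 \<eta>] eta0 eta2 by simp
  have cle: "c \<le> 1/2" unfolding c_def using cos_ge_zero[of \<eta>] eta1 eta0 by simp
  show ?thesis
  proof (intro exI[of _ "c/2"] conjI allI impI)
    show "0 < c/2" using cpos by simp
    show "c/2 < 1/2" using cle by simp
    fix \<theta> :: real and \<xi> :: "real^3"
    assume xi: "norm \<xi> > r"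
    define SB where "SB = {v \<in> cball (0::real^3) (real N). cos (v \<bullet> \<xi> + \<theta>) > cos \<eta>}"
    have SBb: "SB \<in> sets lborel" unfolding SB_def by measurable
    have SBl: "SB \<in> sets lebesgue" using SBb by (intro sets_completionI_sets) auto
    have "emeasure lborel SB * ennreal (2*pi) \<le> ennreal m * ennreal (4*\<eta>)"
      using slab3[OF eta0 eta2 xi r, of "real N" \<theta>] em unfolding SB_def by simp
    have SBsub: "SB \<subseteq> cball 0 (real N)" unfolding SB_def by auto
    have SBfin: "emeasure lborel SB < \<infinity>"
    proof -
      have "emeasure lborel SB \<le> emeasure lborel (cball (0::real^3) (real N))"
        by (rule emeasure_mono[OF SBsub]) simp
      thus ?thesis using emeasure_lborel_cball_finite[of "0::real^3" "real N"] by (rule le_less_trans)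
    qed
    have "emeasure lborel SB = ennreal (measure lborel SB)"
      using SBfin by (intro emeasure_eq_ennreal_measure) auto
    with \<open>emeasure lborel SB * ennreal (2*pi) \<le> ennreal m * ennreal (4*\<eta>)\<close>
    have "ennreal (measure lborel SB * (2*pi)) \<le> ennreal (m * (4*\<eta>))"
      using m0 eta0 by (simp add: ennreal_mult)
    hence "measure lborel SB * (2*pi) \<le> m * (4*\<eta>)"
      using m0 eta0 by (subst (asm) ennreal_le_iff) auto
    hence msb: "measure lborel SB \<le> m * 4 * \<eta> / (2*pi)"
      by (simp add: field_simps)
    have NSB: "real N * measure lebesgue SB \<le> 1/4"
    proof -
      have "real N * measure lebesgue SB = real N * measure lborel SB"
        using SBb by simp
      also have "\<dots> \<le> real N * (m * 4 * \<eta> / (2*pi))" using msb by (intro mult_left_mono) auto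
      finally show ?thesis using etaN by linarith
    qed
    have intSB: "integrable lebesgue (indicator SB :: real^3 \<Rightarrow> real)"
      using SBl SBfin SBb by (intro integrable_real_indicator) auto
    have ptw: "c * (gN N v - real N * indicator SB v) \<le> g v * (sin ((v \<bullet> \<xi> + \<theta>) / 2))\<^sup>2" for v
    proof -
      define x where "x = v \<bullet> \<xi> + \<theta>"
      have s2: "(sin (x/2))\<^sup>2 = (1 - cos x)/2" using cos_double_sin[of "x/2"] by simp
      show ?thesis
      proof (cases "cos x > cos \<eta>")
        case True
        have "gN N v - real N * indicator SB v \<le> 0"
        proof (cases "v \<in> cball 0 (real N)")
          case True
          hence "v \<in> SB" using \<open>cos x > cos \<eta>\<close> unfolding SB_def x_def by auto
          thus ?thesis using gNN[of N v] True by auto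
        next
          case False
          thus ?thesis using gNN[of N v] by (auto simp: indicator_def)
        qed
        hence "c * (gN N v - real N * indicator SB v) \<le> 0" using cpos by (simp add: mult_nonneg_nonpos)
        also have "0 \<le> g v * (sin ((v \<bullet> \<xi> + \<theta>) / 2))\<^sup>2" using nonneg by simp
        finally show ?thesis .
      next
        case False
        have "c * (gN N v - real N * indicator SB v) \<le> c * g v"
          using cpos gNg[of N v] by (intro mult_left_mono) (auto simp: indicator_def)
        also have "\<dots> \<le> (sin (x/2))\<^sup>2 * g v"
          using False nonneg[of v] unfolding s2 c_def by (intro mult_right_mono) auto
        finally show ?thesis unfolding x_def by (simp add: mult.commute)
      qed
    qed
    have intF: "integrable lebesgue (\<lambda>v. g v * (sin ((v \<bullet> \<xi> + \<theta>) / 2))\<^sup>2)"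
    proof (rule Bochner_Integration.integrable_bound[OF int])
      have "(\<lambda>v. (sin ((v \<bullet> \<xi> + \<theta>) / 2))\<^sup>2) \<in> borel_measurable lebesgue"
        by (intro leb_meas continuous_intros) auto
      thus "(\<lambda>v. g v * (sin ((v \<bullet> \<xi> + \<theta>) / 2))\<^sup>2) \<in> borel_measurable lebesgue"
        using gm by measurable
      show "AE v in lebesgue. norm (g v * (sin ((v \<bullet> \<xi> + \<theta>) / 2))\<^sup>2) \<le> norm (g v)"
        using nonneg by (auto simp: abs_mult intro!: mult_left_le simp: abs_square_le_1)
    qed
    have "c/2 \<le> c * (integral\<^sup>L lebesgue (gN N) - real N * measure lebesgue SB)"
    proof -
      have "1/2 \<le> integral\<^sup>L lebesgue (gN N) - real N * measure lebesgue SB" using intN NSB by linarith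
      hence "c * (1/2) \<le> c * (integral\<^sup>L lebesgue (gN N) - real N * measure lebesgue SB)"
        using cpos by (intro mult_left_mono) auto
      thus ?thesis by simp
    qed
    also have "\<dots> = integral\<^sup>L lebesgue (\<lambda>v. c * (gN N v - real N * indicator SB v))"
      using intgN intSB by (simp add: integral_mult_right_zero integral_diff)
    also have "\<dots> \<le> integral\<^sup>L lebesgue (\<lambda>v. g v * (sin ((v \<bullet> \<xi> + \<theta>) / 2))\<^sup>2)"
      using intgN intSB intF ptw by (intro integral_mono) auto
    finally show "integral\<^sup>L lebesgue (\<lambda>v. g v * (sin ((v \<bullet> \<xi> + \<theta>) / 2))\<^sup>2) \<ge> c/2" .
  qed
qed

end
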